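(* Let $J\subseteq\mathbb{M}_2$ be a bigraded ideal and $f,g:\Sigma^{p,q}J\to\mathbb{M}_2$ two bigraded $\mathbb{M}_2$-module homomorphisms. If there is a nonzero homogeneous element $x\in J$ with $f(x)\neq0$ and $f(x)=g(x)$, then $f=g$.
   Context: $\mathbb{M}_2$ is the bigraded commutative $\mathbb{F}_2$-algebra with $\mathbb{F}_2$-basis the elements $\rho^m\tau^n$ ($m,n\ge0$) in bidegree $(m,m+n)$ and $\frac{\theta}{\rho^m\tau^n}$ ($m,n\ge 0$) in bidegree $(-m,-2-m-n)$; multiplication: $\rho^a\tau^b\cdot\rho^c\tau^d=\rho^{a+c}\tau^{b+d}$, $\rho^a\tau^b\cdot\frac{\theta}{\rho^c\tau^d}=\frac{\theta}{\rho^{c-a}\tau^{d-b}}$ if $a\le c,b\le d$ and $0$ otherwise, and the product of two elements of the form $\frac{\theta}{\rho^c\tau^d}$ is $0$. $\Sigma^{p,q}J$ is the shift with $(\Sigma^{p,q}J)^{a,b}=J^{a-p,b-q}$; module homomorphisms preserve bidegree. *)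

theory Defs
  imports Main
begin

text \<open>F2-basis of M2: Pos m n is rho^m tau^n, Neg m n is theta/(rho^m tau^n).
  An element of M2 is a finite F2-linear combination of basis elements,
  represented by the finite set of basis elements occurring with coefficient 1.\<close>

datatype m2basis = Pos nat nat | Neg nat nat

fun m2deg :: "m2basis \<Rightarrow> int \<times> int" where
  "m2deg (Pos m n) = (int m, int m + int n)"
| "m2deg (Neg m n) = (- int m, -2 - int m - int n)"

fun m2bmul :: "m2basis \<Rightarrow> m2basis \<Rightarrow> m2basis option" where
  "m2bmul (Pos a b) (Pos c d) = Some (Pos (a + c) (b + d))"
| "m2bmul (Pos a b) (Neg c d) = (if a \<le> c \<and> b \<le> d then Some (Neg (c - a) (d - b)) else None)"
| "m2bmul (Neg c d) (Pos a b) = (if a \<le> c \<and> b \<le> d then Some (Neg (c - a) (d - b)) else None)"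
| "m2bmul (Neg a b) (Neg c d) = None"

type_synonym m2 = "m2basis set"

definition m2_elem :: "m2 \<Rightarrow> bool" where
  "m2_elem x \<longleftrightarrow> finite x"

definition m2_add :: "m2 \<Rightarrow> m2 \<Rightarrow> m2" where
  "m2_add x y = (x - y) \<union> (y - x)"

text \<open>Bilinear extension of the basis multiplication, coefficients mod 2.\<close>
definition m2_mult :: "m2 \<Rightarrow> m2 \<Rightarrow> m2" where
  "m2_mult x y = {c. odd (card {(a, b). a \<in> x \<and> b \<in> y \<and> m2bmul a b = Some c})}"

text \<open>x is homogeneous of bidegree d (the zero element is homogeneous of every degree).\<close>
definition m2_homog :: "int \<times> int \<Rightarrow> m2 \<Rightarrow> bool" where
  "m2_homog d x \<longleftrightarrow> finite x \<and> (\<forall>b\<in>x. m2deg b = d)"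

definition bigraded_ideal :: "m2 set \<Rightarrow> bool" where
  "bigraded_ideal J \<longleftrightarrow>
     (\<forall>x\<in>J. m2_elem x) \<and> {} \<in> J \<and>
     (\<forall>x\<in>J. \<forall>y\<in>J. m2_add x y \<in> J) \<and>
     (\<forall>r x. m2_elem r \<longrightarrow> x \<in> J \<longrightarrow> m2_mult r x \<in> J) \<and>
     (\<forall>x\<in>J. \<forall>d. {b\<in>x. m2deg b = d} \<in> J)"

text \<open>Bigraded M2-module homomorphism Sigma^{p,q} J \<rightarrow> M2: additive, M2-linear,
  and sending (Sigma^{p,q}J)^{a,b} = J^{a-p,b-q} into M2^{a,b}.\<close>
definition shifted_ideal_hom :: "m2 set \<Rightarrow> int \<Rightarrow> int \<Rightarrow> (m2 \<Rightarrow> m2) \<Rightarrow> bool" where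
  "shifted_ideal_hom J p q f \<longleftrightarrow>
     (\<forall>x\<in>J. m2_elem (f x)) \<and>
     (\<forall>x\<in>J. \<forall>y\<in>J. f (m2_add x y) = m2_add (f x) (f y)) \<and>
     (\<forall>r x. m2_elem r \<longrightarrow> x \<in> J \<longrightarrow> f (m2_mult r x) = m2_mult r (f x)) \<and>
     (\<forall>x\<in>J. \<forall>a b. m2_homog (a - p, b - q) x \<longrightarrow> m2_homog (a, b) (f x))"

end

theory Submission
  imports Defs
begin

lemma deg_inj: "m2deg a = m2deg b \<Longrightarrow> a = b"
  by (cases a; cases b; auto)

lemma bmul_comm: "m2bmul a b = m2bmul b a"
  by (cases a; cases b; auto)

lemma mult_single: "m2_mult {a} {b} = (case m2bmul a b of None \<Rightarrow> {} | Some c \<Rightarrow> {c})"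
proof (cases "m2bmul a b")
  case None
  have h: "\<And>c'. {(a', b'). a' \<in> {a} \<and> b' \<in> {b} \<and> m2bmul a' b' = Some c'} = {}"
    using None by auto
  show ?thesis using None unfolding m2_mult_def h by simp
next
  case (Some c)
  have "\<And>c'. {(a', b'). a' \<in> {a} \<and> b' \<in> {b} \<and> m2bmul a' b' = Some c'} = (if c' = c then {(a,b)} else {})"
    using Some by auto
  then show ?thesis using Some unfolding m2_mult_def by auto
qed

lemma mult_empty: "m2_mult r {} = {}"
  unfolding m2_mult_def by auto

fun wit :: "m2basis \<Rightarrow> m2basis \<Rightarrow> m2basis \<times> m2basis" where
  "wit (Pos m n) (Pos k l) = (Pos (max m k - m) (max n l - n), Pos (max m k - k) (max n l - l))"
| "wit (Pos m n) (Neg k l) = (Neg (m+k) (n+l), Pos 0 0)"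
| "wit (Neg m n) (Pos k l) = (Pos 0 0, Neg (m+k) (n+l))"
| "wit (Neg m n) (Neg k l) = (Pos (m - min m k) (n - min n l), Pos (k - min m k) (l - min n l))"

lemma wit1: "m2bmul (fst (wit x y)) x = m2bmul (snd (wit x y)) y \<and> m2bmul (fst (wit x y)) x \<noteq> None"
  by (cases x; cases y; auto simp: max_def min_def)

lemma wit2:
  assumes "fst (m2deg e) - fst (m2deg x) = fst (m2deg z) - fst (m2deg y)"
    and "snd (m2deg e) - snd (m2deg x) = snd (m2deg z) - snd (m2deg y)"
    and "m2bmul y e = m2bmul x z"
  shows "m2bmul (snd (wit x y)) z \<noteq> None"
  using assms
  by (cases x; cases y; cases e; cases z; auto simp: max_def min_def split: if_splits)

lemma add_self: "m2_add s s = {}" unfolding m2_add_def by auto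

lemma hom_empty:
  assumes "bigraded_ideal J" "shifted_ideal_hom J p q f"
  shows "f {} = {}"
proof -
  have e: "{} \<in> J" using assms(1) unfolding bigraded_ideal_def by blast
  have "f (m2_add {} {}) = m2_add (f {}) (f {})"
    using assms(2) e unfolding shifted_ideal_hom_def by blast
  then show ?thesis by (simp add: add_self m2_add_def)
qed

lemma hom_deg:
  assumes "shifted_ideal_hom J p q f" "{b} \<in> J" "c \<in> f {b}"
  shows "m2deg c = (fst (m2deg b) + p, snd (m2deg b) + q)"
proof -
  have "m2_homog (fst (m2deg b) + p - p, snd (m2deg b) + q - q) {b}"
    unfolding m2_homog_def by simp
  then have "m2_homog (fst (m2deg b) + p, snd (m2deg b) + q) (f {b})"
    using assms(1,2) unfolding shifted_ideal_hom_def by blast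
  then show ?thesis using assms(3) unfolding m2_homog_def by blast
qed

lemma hom_mult:
  assumes "shifted_ideal_hom J p q f" "{b} \<in> J"
  shows "f (m2_mult {r} {b}) = m2_mult {r} (f {b})"
  using assms unfolding shifted_ideal_hom_def m2_elem_def by blast

lemma sub_single:
  assumes "\<forall>c\<in>S. m2deg c = d"
  shows "S = {} \<or> (\<exists>c. S = {c} \<and> m2deg c = d)"
proof (cases "S = {}")
  case False
  then obtain c where c: "c \<in> S" by blast
  have "\<forall>x\<in>S. x = c" using c assms deg_inj by metis
  then have "S = {c}" using c by blast
  then show ?thesis using c assms by blast
qed simp

lemma key:
  assumes J: "bigraded_ideal J" and f: "shifted_ideal_hom J p q f"
    and g: "shifted_ideal_hom J p q g"
    and bx: "{bx} \<in> J" and fx: "f {bx} = {be}" and gx: "g {bx} = {be}"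
    and b: "{b} \<in> J" and fb: "f {b} = {z}"
  shows "g {b} \<noteq> {}"
proof
  assume gb: "g {b} = {}"
  have de: "m2deg be = (fst (m2deg bx) + p, snd (m2deg bx) + q)"
    using hom_deg[OF f bx] fx by simp
  have dz: "m2deg z = (fst (m2deg b) + p, snd (m2deg b) + q)"
    using hom_deg[OF f b] fb by simp
  have "m2_mult {b} {be} = m2_mult {bx} {z}"
    using hom_mult[OF f bx, of b] hom_mult[OF f b, of bx] fx fb
    by (simp add: mult_single bmul_comm)
  then have comm: "m2bmul b be = m2bmul bx z"
    by (simp add: mult_single split: option.splits)
  define r where "r = fst (wit bx b)"
  define r' where "r' = snd (wit bx b)"
  obtain w where w1: "m2bmul r bx = Some w" and w2: "m2bmul r' b = Some w"
    using wit1[of bx b] unfolding r_def r'_def by (metis option.exhaust)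
  obtain u where u: "m2bmul r' z = Some u"
    using wit2[of be bx z b] de dz comm unfolding r'_def by auto
  have "f (m2_mult {r'} {b}) = {u}" using hom_mult[OF f b, of r'] fb u by (simp add: mult_single)
  moreover have "m2_mult {r'} {b} = m2_mult {r} {bx}" using w1 w2 by (simp add: mult_single)
  ultimately have A: "f (m2_mult {r} {bx}) = {u}" by simp
  have "g (m2_mult {r} {bx}) = f (m2_mult {r} {bx})"
    using hom_mult[OF f bx, of r] hom_mult[OF g bx, of r] fx gx by simp
  moreover have "g (m2_mult {r} {bx}) = {}"
    using hom_mult[OF g b, of r'] gb w1 w2 by (simp add: mult_single mult_empty)
  ultimately show False using A by simp
qed

lemma single_eq:
  assumes J: "bigraded_ideal J" and f: "shifted_ideal_hom J p q f"
    and g: "shifted_ideal_hom J p q g"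
    and bx: "{bx} \<in> J" and fx: "f {bx} = {be}" and gx: "g {bx} = {be}"
    and b: "{b} \<in> J"
  shows "f {b} = g {b}"
proof -
  let ?d = "(fst (m2deg b) + p, snd (m2deg b) + q)"
  have F: "f {b} = {} \<or> (\<exists>c. f {b} = {c} \<and> m2deg c = ?d)"
    using sub_single hom_deg[OF f b] by blast
  have G: "g {b} = {} \<or> (\<exists>c. g {b} = {c} \<and> m2deg c = ?d)"
    using sub_single hom_deg[OF g b] by blast
  have k1: "f {b} \<noteq> {} \<Longrightarrow> g {b} \<noteq> {}" using key[OF J f g bx fx gx b] F by blast
  have k2: "g {b} \<noteq> {} \<Longrightarrow> f {b} \<noteq> {}" using key[OF J g f bx gx fx b] G by blast
  show ?thesis using F G k1 k2 deg_inj by metis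
qed

theorem lemmaA3:
  fixes J :: "m2 set" and p q :: int and f g :: "m2 \<Rightarrow> m2" and x :: m2
  assumes "bigraded_ideal J"
    and "shifted_ideal_hom J p q f"
    and "shifted_ideal_hom J p q g"
    and "x \<in> J" and "x \<noteq> {}" and "\<exists>d. m2_homog d x"
    and "f x \<noteq> {}" and "f x = g x"
  shows "\<forall>y\<in>J. f y = g y"
proof
  fix y assume y: "y \<in> J"
  note J = assms(1) and f = assms(2) and g = assms(3)
  obtain d where d: "m2_homog d x" using assms(6) by blast
  obtain bx where bx: "x = {bx}"
    using sub_single[of x d] d assms(5) unfolding m2_homog_def by blast
  have bxJ: "{bx} \<in> J" using assms(4) bx by simp
  obtain be where be: "f {bx} = {be}"
    using sub_single hom_deg[OF f bxJ] assms(7) bx by blast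
  have gbe: "g {bx} = {be}" using be assms(8) bx by simp
  have singJ: "{c} \<in> J" if "c \<in> y" for c
  proof -
    have "{b\<in>y. m2deg b = m2deg c} \<in> J" using J y unfolding bigraded_ideal_def by blast
    moreover have "{b\<in>y. m2deg b = m2deg c} = {c}" using that deg_inj by blast
    ultimately show ?thesis by simp
  qed
  have fin: "finite y" using J y unfolding bigraded_ideal_def m2_elem_def by blast
  have "Y \<subseteq> y \<longrightarrow> Y \<in> J \<and> f Y = g Y" if "finite Y" for Y
  using that proof (induction Y rule: finite_induct)
    case empty
    show ?case using J hom_empty[OF J f] hom_empty[OF J g] unfolding bigraded_ideal_def by simp
  next
    case (insert c F)
    show ?case
    proof
    assume sub: "insert c F \<subseteq> y"
    have cJ: "{c} \<in> J" using singJ sub by blast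
    have IH: "F \<in> J" "f F = g F" using insert sub by auto
    have eq: "insert c F = m2_add {c} F" using insert(2) unfolding m2_add_def by auto
    have "m2_add {c} F \<in> J" using J cJ IH unfolding bigraded_ideal_def by blast
    moreover have "f (m2_add {c} F) = g (m2_add {c} F)"
      using f g cJ IH single_eq[OF J f g bxJ be gbe cJ] unfolding shifted_ideal_hom_def by simp
    ultimately show "insert c F \<in> J \<and> f (insert c F) = g (insert c F)" using eq by simp
    qed
  qed
  then show "f y = g y" using fin by blast
qed

end
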